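(* For every real $x > 0$ and every natural number $n$, $\mathrm{LB}_{\ln}(x,n) \le \ln(x) \le \mathrm{UB}_{\ln}(x,n)$.
   Context: For $1 < x \le 2$ and natural $n$: \[\mathrm{LB}_{\ln}(x,n) = \sum_{i=1}^{2n}(-1)^{i+1}\frac{(x-1)^i}{i},\qquad \mathrm{UB}_{\ln}(x,n) = \sum_{i=1}^{2n+1}(-1)^{i+1}\frac{(x-1)^i}{i}.\] Further: $\mathrm{LB}_{\ln}(1,n)=\mathrm{UB}_{\ln}(1,n)=0$; for $0<x<1$: $\mathrm{LB}_{\ln}(x,n) = -\mathrm{UB}_{\ln}(1/x,n)$ and $\mathrm{UB}_{\ln}(x,n) = -\mathrm{LB}_{\ln}(1/x,n)$; for $x>2$: let $m$ be the natural number and $y$ the real with $x = 2^m y$ and $1 \le y < 2$ (equivalently $(m,y)=\mathrm{lnnat}(x,2)$, where $\mathrm{lnnat}(x,k)=(0,x)$ if $x<k$ and otherwise $(m'+1,y')$ with $(m',y')=\mathrm{lnnat}(x/k,k)$), and set $\mathrm{LB}_{\ln}(x,n) = m\,\mathrm{LB}_{\ln}(2,n) + \mathrm{LB}_{\ln}(y,n)$ and $\mathrm{UB}_{\ln}(x,n) = m\,\mathrm{UB}_{\ln}(2,n) + \mathrm{UB}_{\ln}(y,n)$. *)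

theory Defs
  imports Complex_Main
begin

definition lb_series :: "real \<Rightarrow> nat \<Rightarrow> real" where
  "lb_series x n = (\<Sum>i=1..2*n. (-1)^(i+1) * (x - 1)^i / real i)"

definition ub_series :: "real \<Rightarrow> nat \<Rightarrow> real" where
  "ub_series x n = (\<Sum>i=1..2*n+1. (-1)^(i+1) * (x - 1)^i / real i)"

definition ln_split :: "real \<Rightarrow> nat \<times> real" where
  "ln_split x = (THE (m, y). x = 2^m * y \<and> 1 \<le> y \<and> y < 2)"

definition LB_ln12 :: "real \<Rightarrow> nat \<Rightarrow> real" where
  "LB_ln12 x n = (if x = 1 then 0 else lb_series x n)"

definition UB_ln12 :: "real \<Rightarrow> nat \<Rightarrow> real" where
  "UB_ln12 x n = (if x = 1 then 0 else ub_series x n)"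

definition LB_ln_ge1 :: "real \<Rightarrow> nat \<Rightarrow> real" where
  "LB_ln_ge1 x n = (if x \<le> 2 then LB_ln12 x n
     else (case ln_split x of (m, y) \<Rightarrow> real m * LB_ln12 2 n + LB_ln12 y n))"

definition UB_ln_ge1 :: "real \<Rightarrow> nat \<Rightarrow> real" where
  "UB_ln_ge1 x n = (if x \<le> 2 then UB_ln12 x n
     else (case ln_split x of (m, y) \<Rightarrow> real m * UB_ln12 2 n + UB_ln12 y n))"

definition LB_ln :: "real \<Rightarrow> nat \<Rightarrow> real" where
  "LB_ln x n = (if x < 1 then - UB_ln_ge1 (1 / x) n else LB_ln_ge1 x n)"

definition UB_ln :: "real \<Rightarrow> nat \<Rightarrow> real" where
  "UB_ln x n = (if x < 1 then - LB_ln_ge1 (1 / x) n else UB_ln_ge1 x n)"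

end

theory Submission
  imports Defs
begin

definition S :: "nat \<Rightarrow> real \<Rightarrow> real" where
  "S k t = (\<Sum>i=1..k. (-1)^(i+1) * t^i / real i)"

lemma geo: "(1+t) * (\<Sum>i=1..k. (-1)^(i+1) * t^(i-1)) = 1 - (-t)^k" for t :: real
proof (induction k)
  case 0 then show ?case by simp
next
  case (Suc k)
  have m: "(-t)^k = (-1)^k * t^k" by (rule power_minus)
  have "(\<Sum>i=1..Suc k. (-1)^(i+1) * t^(i-1)) = (\<Sum>i=1..k. (-1)^(i+1) * t^(i-1)) + (-1)^(Suc k+1) * t^k"
    by (simp add: sum.cl_ivl_Suc)
  also have "(-1)^(Suc k+1) * t^k = (-t)^k" unfolding m by simp
  finally have "(\<Sum>i=1..Suc k. (-1)^(i+1) * t^(i-1)) = (\<Sum>i=1..k. (-1)^(i+1) * t^(i-1)) + (-t)^k" .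
  then have "(1+t) * (\<Sum>i=1..Suc k. (-1)^(i+1) * t^(i-1)) = 1 - (-t)^k + (1+t) * (-t)^k"
    using Suc.IH by (simp add: distrib_left)
  also have "\<dots> = 1 - (-t)^Suc k" by (simp add: algebra_simps)
  finally show ?case .
qed

lemma S_term_deriv:
  assumes "i \<ge> 1"
  shows "((\<lambda>t. (-1)^(i+1) * t^i / real i) has_real_derivative (-1)^(i+1) * t^(i-1)) (at t)"
proof -
  have "((\<lambda>t. (-1)^(i+1) * t^i / real i) has_real_derivative (-1)^(i+1) * (real i * t^(i-1)) / real i) (at t)"
    by (auto intro!: derivative_eq_intros)
  moreover have "(-1)^(i+1) * (real i * t^(i-1)) / real i = (-1)^(i+1) * t^(i-1)"
    using assms by simp
  ultimately show ?thesis by simp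
qed

lemma S_deriv: "(S k has_real_derivative (\<Sum>i=1..k. (-1)^(i+1) * t^(i-1))) (at t)"
proof -
  have "((\<lambda>t. \<Sum>i=1..k. (-1)^(i+1) * t^i / real i) has_real_derivative (\<Sum>i=1..k. (-1)^(i+1) * t^(i-1))) (at t)"
    by (rule DERIV_sum) (rule S_term_deriv, simp)
  moreover have "S k = (\<lambda>t. \<Sum>i=1..k. (-1)^(i+1) * t^i / real i)" by (rule ext) (simp add: S_def)
  ultimately show ?thesis by simp
qed

lemma main_bound:
  fixes t :: real assumes t: "t \<ge> 0"
  shows "0 \<le> (-1)^k * (ln (1+t) - S k t)"
proof -
  let ?g = "\<lambda>s. (-1)^k * (ln (1+s) - S k s)"
  have "?g 0 \<le> ?g t"
  proof (rule DERIV_nonneg_imp_nondecreasing[OF t])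
    fix s :: real assume s: "0 \<le> s" "s \<le> t"
    define D where "D = (\<Sum>i=1..k. (-1)^(i+1) * s^(i-1) :: real)"
    have ln: "((\<lambda>s. ln(1+s)) has_real_derivative 1/(1+s)) (at s)"
      using s by (auto intro!: derivative_eq_intros)
    have d: "(?g has_real_derivative (-1)^k * (1/(1+s) - D)) (at s)"
      unfolding D_def by (rule DERIV_cmult[OF DERIV_diff[OF ln S_deriv]])
    have s1: "1 + s > 0" using s by simp
    have "(1+s) * D = 1 - (-s)^k" unfolding D_def by (rule geo)
    hence "D = (1 - (-s)^k)/(1+s)" using s1 by (simp add: eq_divide_eq mult.commute)
    hence "1/(1+s) - D = (-s)^k/(1+s)" by (simp add: diff_divide_distrib)
    moreover have "(-1)^k * (-s)^k = s^k" by (simp add: power_mult_distrib[symmetric])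
    ultimately have "(-1)^k * (1/(1+s) - D) = s^k/(1+s)" by simp
    moreover have "s^k/(1+s) \<ge> 0" using s by simp
    ultimately show "\<exists>y. (?g has_real_derivative y) (at s) \<and> 0 \<le> y" using d by metis
  qed
  moreover have "S k 0 = 0" unfolding S_def by (intro sum.neutral) auto
  hence "?g 0 = 0" by simp
  ultimately show ?thesis by simp
qed

lemma bounds12:
  fixes x :: real assumes "1 \<le> x"
  shows "LB_ln12 x n \<le> ln x \<and> ln x \<le> UB_ln12 x n"
proof -
  have e1: "S (2*n) (x-1) = lb_series x n" by (simp add: S_def lb_series_def)
  have e2: "S (2*n+1) (x-1) = ub_series x n" by (simp add: S_def ub_series_def)
  have "0 \<le> (-1)^(2*n) * (ln (1+(x-1)) - S (2*n) (x-1))" using assms by (intro main_bound) simp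
  hence a: "lb_series x n \<le> ln x" unfolding e1 by simp
  have "0 \<le> (-1)^(2*n+1) * (ln (1+(x-1)) - S (2*n+1) (x-1))" using assms by (intro main_bound) simp
  hence b: "ln x \<le> ub_series x n" unfolding e2 by simp
  show ?thesis using a b by (simp add: LB_ln12_def UB_ln12_def)
qed

lemma split_unique:
  fixes x y :: real and m :: nat
  assumes "x = 2^m * y" "1 \<le> y" "y < 2"
  shows "m = nat \<lfloor>log 2 x\<rfloor>"
proof -
  have "log 2 x = m + log 2 y" using assms by (simp add: log_mult log_nat_power)
  moreover have "0 \<le> log 2 y" "log 2 y < 1" using assms by auto
  ultimately have "\<lfloor>log 2 x\<rfloor> = int m" by (intro floor_unique) auto
  thus ?thesis by simp
qed

lemma split_exists:
  fixes x :: real assumes that: "x \<ge> 1"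
  shows "\<exists>m::nat. \<exists>y. x = 2^m * y \<and> 1 \<le> y \<and> y < 2"
proof -
  define m where "m = nat \<lfloor>log 2 x\<rfloor>"
  have l0: "log 2 x \<ge> 0" using that by simp
  have mm: "real m \<le> log 2 x" "log 2 x < real m + 1" using l0 unfolding m_def
    by (auto simp: of_nat_nat)
  define y where "y = x / 2^m"
  have e1: "x = 2^m * y" unfolding y_def by simp
  have xp: "2 powr log 2 x = x" using that by simp
  have "2 powr real m \<le> 2 powr log 2 x" by (rule powr_mono) (use mm in auto)
  hence "2 powr real m \<le> x" using xp by simp
  hence e2: "1 \<le> y" unfolding y_def by (simp add: powr_realpow)
  have "2 powr log 2 x < 2 powr (real m + 1)" by (rule powr_less_mono) (use mm in auto)
  hence "x < 2 powr (real m + 1)" using xp by simp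
  hence e3: "y < 2" unfolding y_def by (simp add: powr_add powr_realpow field_simps)
  show ?thesis using e1 e2 e3 by blast
qed

lemma ln_split_prop:
  fixes x :: real assumes "x \<ge> 1"
  shows "x = 2^(fst (ln_split x)) * snd (ln_split x) \<and> 1 \<le> snd (ln_split x) \<and> snd (ln_split x) < 2"
proof -
  obtain m y where my: "x = 2^m * y" "1 \<le> y" "y < 2" using split_exists[OF assms] by auto
  have "ln_split x = (m, y)" unfolding ln_split_def
  proof (rule the_equality)
    show "case (m, y) of (m, y) \<Rightarrow> x = 2 ^ m * y \<and> 1 \<le> y \<and> y < 2" using my by simp
  next
    fix p assume "case p of (m', y') \<Rightarrow> x = 2 ^ m' * y' \<and> 1 \<le> y' \<and> y' < 2"
    then obtain m' y' where p: "p = (m', y')" "x = 2 ^ m' * y'" "1 \<le> y'" "y' < 2" by (cases p) auto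
    have "m' = m" using split_unique[OF p(2-4)] split_unique[OF my] by simp
    moreover have "y' = y" using p(2) my(1) \<open>m' = m\<close> by simp
    ultimately show "p = (m, y)" using p by simp
  qed
  thus ?thesis using my by simp
qed

lemma bounds_ge1:
  fixes x :: real assumes "1 \<le> x"
  shows "LB_ln_ge1 x n \<le> ln x \<and> ln x \<le> UB_ln_ge1 x n"
proof (cases "x \<le> 2")
  case True thus ?thesis using bounds12[OF assms] by (simp add: LB_ln_ge1_def UB_ln_ge1_def)
next
  case False
  obtain m y where e: "ln_split x = (m, y)" by (cases "ln_split x")
  have my: "x = 2^m * y" "1 \<le> y" "y < 2" using ln_split_prop[OF assms] e by auto
  have lx: "ln x = real m * ln 2 + ln y" using my by (simp add: ln_mult ln_realpow)
  have b2: "LB_ln12 2 n \<le> ln 2 \<and> ln 2 \<le> UB_ln12 2 n" using bounds12[of 2] by simp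
  have by': "LB_ln12 y n \<le> ln y \<and> ln y \<le> UB_ln12 y n" using bounds12 my by simp
  have "real m * LB_ln12 2 n \<le> real m * ln 2" "real m * ln 2 \<le> real m * UB_ln12 2 n"
    using b2 by (auto intro: mult_left_mono)
  thus ?thesis using False e lx by' by (simp add: LB_ln_ge1_def UB_ln_ge1_def)
qed

theorem proposition8:
  fixes x :: real and n :: nat
  assumes "x > 0"
  shows "LB_ln x n \<le> ln x \<and> ln x \<le> UB_ln x n"
proof (cases "x < 1")
  case True
  have "1 \<le> 1/x" using True assms by simp
  from bounds_ge1[OF this, of n] have "LB_ln_ge1 (1/x) n \<le> - ln x \<and> - ln x \<le> UB_ln_ge1 (1/x) n"
    using assms by (simp add: ln_div)
  thus ?thesis using True by (simp add: LB_ln_def UB_ln_def)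
next
  case False
  thus ?thesis using bounds_ge1[of x n] by (simp add: LB_ln_def UB_ln_def)
qed

end
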